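(* Define $p_0=1$, $q_0=2$, and for $k\ge1$, $p_k=2q_{k-1}$ and $q_k=3q_{k-1}-1$. Let $T_k=\{p_k,p_k+1,\ldots,q_k\}$ and $T=\bigcup_{k\ge0}T_k$. For each $k$, let $\tau_k$ be a permutation of $T_k$ containing no 3-term arithmetic progression as a subsequence. Then: (a) the concatenation $\tau_0\tau_1\tau_2\cdots$ contains no 3-term arithmetic progression as a subsequence, so $T$ is 3-free; (b) $\overline{d}(T)=1/2$ and $\underline{d}(T)=1/4$.
   Context: A sequence contains a $k$-term arithmetic progression as a subsequence if there are positions $i_1<\cdots<i_k$ whose entries satisfy $a_{i_{m+1}}-a_{i_m}=d$ for all $m$, for some fixed $d\neq0$ (positive or negative). A set $S$ of positive integers is $n$-free if its elements can be listed in a sequence, each element appearing exactly once, that contains no $n$-term arithmetic progression as a subsequence. For $S\subseteq\mathbb{Z}_{>0}$ with $A(n)=|S\cap[1,n]|$, the upper density is $\overline{d}(S)=\limsup_{n\to\infty}A(n)/n$ and the lower density is $\underline{d}(S)=\liminf_{n\to\infty}A(n)/n$. Every finite set of consecutive integers admits a permutation with no 3-term arithmetic progression as a subsequence. *)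

theory Defs
  imports Complex_Main "HOL-Library.Liminf_Limsup" "HOL-Library.Extended_Real"
begin

definition has_AP :: "nat \<Rightarrow> (nat \<Rightarrow> nat) \<Rightarrow> nat set \<Rightarrow> bool" where
  "has_AP k a I \<longleftrightarrow>
     (\<exists>i :: nat \<Rightarrow> nat. \<exists>d :: int. d \<noteq> 0 \<and>
        (\<forall>m. Suc m < k \<longrightarrow> i m < i (Suc m)) \<and>
        (\<forall>m < k. i m \<in> I) \<and>
        (\<forall>m. Suc m < k \<longrightarrow> int (a (i (Suc m))) - int (a (i m)) = d))"

definition list_has_AP :: "nat \<Rightarrow> nat list \<Rightarrow> bool" where
  "list_has_AP k xs \<longleftrightarrow> has_AP k (\<lambda>j. xs ! j) {..<length xs}"

definition n_free :: "nat \<Rightarrow> nat set \<Rightarrow> bool" where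
  "n_free n S \<longleftrightarrow>
     (\<exists>xs. distinct xs \<and> set xs = S \<and> \<not> list_has_AP n xs) \<or>
     (\<exists>a :: nat \<Rightarrow> nat. bij_betw a UNIV S \<and> \<not> has_AP n a UNIV)"

definition counting :: "nat set \<Rightarrow> nat \<Rightarrow> nat" where
  "counting S n = card (S \<inter> {1..n})"

definition upper_density :: "nat set \<Rightarrow> ereal" where
  "upper_density S = limsup (\<lambda>n. ereal (real (counting S n) / real n))"

definition lower_density :: "nat set \<Rightarrow> ereal" where
  "lower_density S = liminf (\<lambda>n. ereal (real (counting S n) / real n))"

fun qseq :: "nat \<Rightarrow> nat" where
  "qseq 0 = 2"
| "qseq (Suc k) = 3 * qseq k - 1"

fun pseq :: "nat \<Rightarrow> nat" where
  "pseq 0 = 1"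
| "pseq (Suc k) = 2 * qseq k"

definition Tblock :: "nat \<Rightarrow> nat set" where
  "Tblock k = {pseq k..qseq k}"

definition Tset :: "nat set" where
  "Tset = (\<Union>k. Tblock k)"

text \<open>Infinite concatenation tau 0 @ tau 1 @ tau 2 @ ... of (nonempty) lists,
as a sequence indexed by positions.\<close>
definition offset :: "(nat \<Rightarrow> 'a list) \<Rightarrow> nat \<Rightarrow> nat" where
  "offset \<tau> k = (\<Sum>j<k. length (\<tau> j))"

definition concat_inf :: "(nat \<Rightarrow> 'a list) \<Rightarrow> nat \<Rightarrow> 'a" where
  "concat_inf \<tau> i = (let k = (LEAST k. i < offset \<tau> (Suc k)) in \<tau> k ! (i - offset \<tau> k))"

end

theory Submission imports Defs "HOL-Real_Asymp.Real_Asymp" begin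
lemma sq3: "(m::nat)^2 \<le> 3^m"
proof (induction m rule: less_induct)
  case (less m)
  show ?case
  proof (cases "m \<le> 2")
    case True then have "m = 0 \<or> m = 1 \<or> m = 2" by auto
    then show ?thesis by auto
  next
    case False
    then obtain j where j: "m = Suc j" "j \<ge> 2" by (cases m) auto
    have "j^2 \<le> 3^j" using less j by auto
    moreover have "(Suc j)^2 \<le> 3 * j^2"
    proof -
      have "2*j \<le> j*j" using j(2) by (metis mult_le_mono1 mult.commute)
      moreover have "(Suc j)^2 = j*j + 2*j + 1" "j^2 = j*j" by (simp_all add: power2_eq_square)
      ultimately show ?thesis using j(2) by linarith
    qed
    ultimately show ?thesis using j by simp
  qed
qed

lemma q_ge2: "qseq k \<ge> 2"
  by (induction k) auto

lemma q_closed: "2 * qseq k = 3^(k+1) + 1"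
proof (induction k)
  case 0 then show ?case by simp
next
  case (Suc k)
  have "qseq k \<ge> 2" by (rule q_ge2)
  then show ?case using Suc by simp
qed

lemma p_Suc: "pseq (Suc k) = 3^(k+1) + 1"
  using q_closed[of k] by simp

lemma q_less_Suc: "qseq k < qseq (Suc k)"
  using q_ge2[of k] by simp

lemma q_mono: "j \<le> k \<Longrightarrow> qseq j \<le> qseq k"
  using q_less_Suc by (metis lift_Suc_mono_le order_less_imp_le)

lemma q_smono: "strict_mono qseq"
  using q_less_Suc by (simp add: strict_mono_Suc_iff)

lemma p_le_q: "pseq k \<le> qseq k"
  by (cases k) (use q_ge2 in auto)

lemma p_ge1: "pseq k \<ge> 1"
  using q_ge2 by (cases k) (auto, metis Suc_leI le_trans less_imp_le_nat numeral_2_eq_2 zero_less_Suc mult_le_mono2 one_le_numeral)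

lemma Tset_iff: "x \<in> Tset \<longleftrightarrow> (\<exists>k. pseq k \<le> x \<and> x \<le> qseq k)"
  unfolding Tset_def Tblock_def by auto

lemma blocks_far:
  assumes "j < k" "x \<in> Tblock j" "y \<in> Tblock k"
  shows "2 * x \<le> y \<and> qseq k - pseq k < y - x \<and> x < y"
proof -
  obtain m where k: "k = Suc m" and jm: "j \<le> m" using assms(1) by (cases k) auto
  have "x \<le> qseq j" using assms(2) by (simp add: Tblock_def)
  also have "\<dots> \<le> qseq m" using q_mono jm by blast
  finally have xq: "x \<le> qseq m" .
  have yp: "y \<ge> 2 * qseq m" "y \<le> qseq (Suc m)" using assms(3) k by (auto simp: Tblock_def)
  have "qseq m \<ge> 2" by (rule q_ge2)
  then show ?thesis using xq yp k by auto
qed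

lemma blocks_disj: "x \<in> Tblock j \<Longrightarrow> x \<in> Tblock k \<Longrightarrow> j = k"
  using blocks_far by (metis less_irrefl nat_neq_iff)

lemma T_ge1: "x \<in> Tblock k \<Longrightarrow> x \<ge> 1"
  using p_ge1[of k] by (auto simp: Tblock_def)

lemma mid_range:
  assumes "n \<le> qseq (Suc k)"
  shows "Tset \<inter> {Suc (qseq k)..n} = {pseq (Suc k)..n}"
proof (intro equalityI subsetI)
  fix x assume x: "x \<in> Tset \<inter> {Suc (qseq k)..n}"
  then obtain j where j: "pseq j \<le> x" "x \<le> qseq j" using Tset_iff by auto
  have "j = Suc k"
  proof (rule ccontr)
    assume ne: "j \<noteq> Suc k"
    show False
    proof (cases "j \<le> k")
      case True then show False using q_mono[OF True] j x by auto
    next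
      case False
      with ne have "Suc (Suc k) \<le> j" by auto
      then obtain m where m: "j = Suc m" "Suc k \<le> m" by (cases j) auto
      have "qseq (Suc k) \<le> qseq m" using q_mono m by blast
      moreover have "qseq m < pseq j" using m q_ge2[of m] by simp
      ultimately show False using j x assms by auto
    qed
  qed
  then show "x \<in> {pseq (Suc k)..n}" using j x by auto
next
  fix x assume x: "x \<in> {pseq (Suc k)..n}"
  have "qseq k < pseq (Suc k)" using q_ge2[of k] by simp
  moreover have "x \<in> Tset" unfolding Tset_iff using x assms by (intro exI[of _ "Suc k"]) auto
  ultimately show "x \<in> Tset \<inter> {Suc (qseq k)..n}" using x by auto
qed

lemma count_split:
  assumes "qseq k \<le> n" "n \<le> qseq (Suc k)"
  shows "counting Tset n = counting Tset (qseq k) + (n + 1 - pseq (Suc k))"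
proof -
  have "Tset \<inter> {1..n} = (Tset \<inter> {1..qseq k}) \<union> (Tset \<inter> {Suc (qseq k)..n})"
    using assms by auto
  also have "\<dots> = (Tset \<inter> {1..qseq k}) \<union> {pseq (Suc k)..n}" using mid_range[OF assms(2)] by simp
  finally have e: "Tset \<inter> {1..n} = (Tset \<inter> {1..qseq k}) \<union> {pseq (Suc k)..n}" .
  have d: "(Tset \<inter> {1..qseq k}) \<inter> {pseq (Suc k)..n} = {}" using q_ge2[of k] by auto
  show ?thesis unfolding counting_def e
    by (subst card_Un_disjoint) (use d in auto)
qed

lemma count_q0: "counting Tset (qseq 0) = 2"
proof -
  have "Tset \<inter> {1..2} = {1..2}"
  proof (intro equalityI subsetI)
    fix x assume "x \<in> {1..2::nat}" then show "x \<in> Tset \<inter> {1..2}"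
      using Tset_iff[of x] by (auto intro: exI[of _ 0])
  qed auto
  then show ?thesis by (simp add: counting_def)
qed

lemma count_q: "4 * counting Tset (qseq k) = 3^(k+1) + 2*k + 5"
proof (induction k)
  case 0 then show ?case using count_q0 by simp
next
  case (Suc k)
  have "counting Tset (qseq (Suc k)) = counting Tset (qseq k) + (qseq (Suc k) + 1 - pseq (Suc k))"
    using count_split[of k "qseq (Suc k)"] q_less_Suc[of k] by simp
  moreover have "qseq (Suc k) + 1 - pseq (Suc k) = qseq k" using q_ge2[of k] by simp
  ultimately show ?case using Suc q_closed[of k] by simp
qed

lemma q_gt: "k < qseq k"
proof (induction k)
  case 0 then show ?case by simp
next
  case (Suc k) then show ?case using q_less_Suc[of k] by simp
qed

lemma find_k:
  assumes "n \<ge> 2"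
  obtains k where "qseq k \<le> n" "n \<le> qseq (Suc k)"
proof -
  have ex: "\<exists>m. n < qseq m"
  proof -
    have "n < qseq n" by (rule q_gt)
    then show ?thesis by blast
  qed
  define m where "m = (LEAST m. n < qseq m)"
  have m1: "n < qseq m" unfolding m_def by (rule LeastI_ex[OF ex])
  have m0: "m \<noteq> 0"
  proof
    assume "m = 0" then show False using m1 assms by simp
  qed
  then obtain k where k: "m = Suc k" by (cases m) auto
  have "k < m" using k by simp
  then have "\<not> n < qseq k" unfolding m_def by (rule not_less_Least)
  then have h1: "qseq k \<le> n" by simp
  have h2: "n \<le> qseq (Suc k)" using m1 k by simp
  show ?thesis using h1 h2 by (rule that)
qed

lemma bounds:
  assumes "n \<ge> 2"
  shows "real n \<le> 4 * real (counting Tset n)"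
    and "2 * real (counting Tset n) \<le> real n + 6 * sqrt (real n)"
proof -
  obtain k where k: "qseq k \<le> n" "n \<le> qseq (Suc k)" using find_k assms by blast
  define X where "X = (3::nat)^(k+1)"
  define A where "A = counting Tset n"
  have A: "A = counting Tset (qseq k) + (n + 1 - pseq (Suc k))" using count_split[OF k] A_def by simp
  have C: "4 * counting Tset (qseq k) = X + 2*k + 5" using count_q X_def by simp
  have p: "pseq (Suc k) = X + 1" using p_Suc X_def by simp
  have q1: "2 * qseq k = X + 1" using q_closed X_def by simp
  have q2: "2 * qseq (Suc k) = 3 * X + 1" using q_closed[of "Suc k"] X_def by simp
  show "real n \<le> 4 * real (counting Tset n)"
  proof -
    have "n \<le> 4 * A" using A C p q2 k by linarith
    then show ?thesis unfolding A_def by linarith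
  qed
  have lin: "2 * A \<le> n + (k + 3)" using A C p q2 q1 k by linarith
  have sq: "(k+3)^2 \<le> 9 * X"
    using sq3[of "k+3"] X_def by (simp add: power_add)
  have "9 * X \<le> 36 * n" using q1 k by linarith
  then have "real ((k+3)^2) \<le> real (36 * n)" using sq by linarith
  then have "real (k+3) \<le> sqrt (36 * real n)"
    by (metis of_nat_mult of_nat_numeral of_nat_power real_le_rsqrt)
  also have "sqrt (36 * real n) = 6 * sqrt (real n)" by (simp add: real_sqrt_mult)
  finally have "real (k+3) \<le> 6 * sqrt (real n)" .
  moreover have "real (2 * A) \<le> real (n + (k+3))" using lin by linarith
  ultimately show "2 * real (counting Tset n) \<le> real n + 6 * sqrt (real n)" unfolding A_def by simp
qed


lemma ratio_upper:
  assumes "n \<ge> 2"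
  shows "real (counting Tset n) / real n \<le> 1/2 + 3 / sqrt (real n)"
proof -
  have b: "2 * real (counting Tset n) \<le> real n + 6 * sqrt (real n)" using bounds(2)[OF assms] .
  have np: "real n > 0" using assms by simp
  have s: "sqrt (real n) * sqrt (real n) = real n" using np by simp
  have sp: "sqrt (real n) > 0" using np by simp
  have e: "3 / sqrt (real n) = 3 * sqrt (real n) / real n" using s sp by (simp add: field_simps)
  have "real (counting Tset n) / real n = (2 * real (counting Tset n)) / (2 * real n)" by simp
  also have "\<dots> \<le> (real n + 6 * sqrt (real n)) / (2 * real n)" by (rule divide_right_mono[OF b]) simp
  also have "\<dots> = 1/2 + 3 * sqrt (real n) / real n" using np by (simp add: field_simps)
  finally show ?thesis using e by simp
qed

lemma ratio_lower:
  assumes "n \<ge> 2"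
  shows "1/4 \<le> real (counting Tset n) / real n"
  using bounds(1)[OF assms] assms by (simp add: field_simps)

lemma at_q: "1/2 \<le> real (counting Tset (qseq k)) / real (qseq k)"
proof -
  have "2 * qseq k \<le> 2 * (2 * counting Tset (qseq k))" using count_q[of k] q_closed[of k] by linarith
  then have "real (qseq k) \<le> 2 * real (counting Tset (qseq k))" by linarith
  moreover have "real (qseq k) > 0" using q_ge2[of k] by simp
  ultimately show ?thesis by (simp add: field_simps)
qed

lemma at_3pow: "real (counting Tset (3^(k+1))) / real (3^(k+1)::nat) \<le> 1/4 + 3 / sqrt (real (3^(k+1)::nat))"
proof -
  define X where "X = (3::nat)^(k+1)"
  have q1: "2 * qseq k = X + 1" using q_closed X_def by simp
  have q2: "2 * qseq (Suc k) = 3 * X + 1" using q_closed[of "Suc k"] X_def by simp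
  have p: "pseq (Suc k) = X + 1" using p_Suc X_def by simp
  have "counting Tset X = counting Tset (qseq k) + (X + 1 - pseq (Suc k))"
    by (rule count_split) (use q1 q2 in linarith)+
  then have A: "4 * counting Tset X = X + 2*k + 5" using count_q[of k] p X_def by simp
  have sq: "(k+3)^2 \<le> 9 * X" using sq3[of "k+3"] X_def by (simp add: power_add)
  then have "real ((k+3)^2) \<le> 9 * real X" by linarith
  then have "real (k+3) \<le> sqrt (9 * real X)"
    by (metis of_nat_power real_le_rsqrt)
  also have "sqrt (9 * real X) = 3 * sqrt (real X)" by (simp add: real_sqrt_mult)
  finally have k3: "real k + 3 \<le> 3 * sqrt (real X)" by simp
  have Xp: "real X > 0" using X_def by simp
  have s: "sqrt (real X) * sqrt (real X) = real X" using Xp by simp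
  have sp: "sqrt (real X) > 0" using Xp by simp
  have "3 / sqrt (real X) = 3 * sqrt (real X) / real X" using s sp by (simp add: field_simps)
  moreover have "4 * real (counting Tset X) = real X + 2 * real k + 5" using A by linarith
  moreover have "real (counting Tset X) / real X = (4 * real (counting Tset X)) / (4 * real X)" by simp
  moreover have "(real X + 2 * real k + 5) / (4 * real X) \<le> (real X + 12 * sqrt (real X)) / (4 * real X)"
    by (rule divide_right_mono) (use k3 sp in linarith, simp)
  moreover have "(real X + 12 * sqrt (real X)) / (4 * real X) = 1/4 + 3 * sqrt (real X) / real X"
    using Xp by (simp add: field_simps)
  ultimately have "real (counting Tset X) / real X \<le> 1/4 + 3 / sqrt (real X)"
    by simp
  then show ?thesis unfolding X_def .
qed

lemma g_lim: "(\<lambda>n::nat. ereal (c + 3 / sqrt (real n))) \<longlonglongrightarrow> ereal c"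
proof -
  have "(\<lambda>n::nat. c + 3 / sqrt (real n)) \<longlonglongrightarrow> c" by real_asymp
  then show ?thesis by simp
qed

lemma upper: "upper_density Tset = ereal (1/2)"
proof (rule antisym)
  let ?f = "\<lambda>n. ereal (real (counting Tset n) / real n)"
  have "limsup ?f \<le> limsup (\<lambda>n::nat. ereal (1/2 + 3 / sqrt (real n)))"
    by (rule Limsup_mono) (use ratio_upper in \<open>auto simp: eventually_at_top_linorder intro!: exI[of _ 2]\<close>)
  also have "\<dots> = ereal (1/2)" by (rule lim_imp_Limsup) (use g_lim in auto)
  finally show "upper_density Tset \<le> ereal (1/2)" unfolding upper_density_def .
  have "ereal (1/2) \<le> limsup (?f \<circ> qseq)"
    by (rule le_Limsup) (use at_q in auto)
  also have "\<dots> \<le> limsup ?f" by (rule limsup_subseq_mono[OF q_smono])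
  finally show "ereal (1/2) \<le> upper_density Tset" unfolding upper_density_def .
qed

lemma lower: "lower_density Tset = ereal (1/4)"
proof (rule antisym)
  let ?f = "\<lambda>n. ereal (real (counting Tset n) / real n)"
  let ?r = "\<lambda>k::nat. (3::nat)^(k+1)"
  have r: "strict_mono ?r" by (simp add: strict_mono_Suc_iff)
  have "liminf ?f \<le> liminf (?f \<circ> ?r)" by (rule liminf_subseq_mono[OF r])
  also have "\<dots> \<le> liminf ((\<lambda>n::nat. ereal (1/4 + 3 / sqrt (real n))) \<circ> ?r)"
    by (rule Liminf_mono) (use at_3pow in auto)
  also have "\<dots> = ereal (1/4)"
    by (rule lim_imp_Liminf) (use LIMSEQ_subseq_LIMSEQ[OF g_lim r] in auto)
  finally show "lower_density Tset \<le> ereal (1/4)" unfolding lower_density_def .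
  have "ereal (1/4) \<le> liminf ?f"
    by (rule Liminf_bounded) (use ratio_lower in \<open>auto simp: eventually_at_top_linorder intro!: exI[of _ 2]\<close>)
  then show "ereal (1/4) \<le> lower_density Tset" unfolding lower_density_def .
qed


context
  fixes \<tau> :: "nat \<Rightarrow> nat list"
  assumes dist: "\<And>k. distinct (\<tau> k)"
      and setT: "\<And>k. set (\<tau> k) = Tblock k"
begin

lemma len_pos: "length (\<tau> k) \<ge> 1"
proof -
  have "length (\<tau> k) = card (Tblock k)" using distinct_card[OF dist[of k]] setT[of k] by simp
  also have "\<dots> = qseq k + 1 - pseq k" by (simp add: Tblock_def)
  finally show ?thesis using p_le_q[of k] by simp
qed

lemma off_Suc: "offset \<tau> (Suc k) = offset \<tau> k + length (\<tau> k)"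
  by (simp add: offset_def)

lemma off_ge: "offset \<tau> k \<ge> k"
proof (induction k)
  case 0 then show ?case by simp
next
  case (Suc k)
  have "1 \<le> length (\<tau> k)" by (rule len_pos)
  then show ?case using Suc off_Suc[of k] by linarith
qed

lemma off_mono: "j < k \<Longrightarrow> offset \<tau> (Suc j) \<le> offset \<tau> k"
proof (induction k)
  case 0 then show ?case by simp
next
  case (Suc k)
  then show ?case using off_Suc[of k] by (cases "j = k") auto
qed

lemma concat_at:
  assumes "j < length (\<tau> k)"
  shows "concat_inf \<tau> (offset \<tau> k + j) = \<tau> k ! j"
proof -
  have "(LEAST k'. offset \<tau> k + j < offset \<tau> (Suc k')) = k"
  proof (rule Least_equality)
    show "offset \<tau> k + j < offset \<tau> (Suc k)" using assms off_Suc by simp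
  next
    fix k' assume h: "offset \<tau> k + j < offset \<tau> (Suc k')"
    show "k \<le> k'"
    proof (rule ccontr)
      assume "\<not> k \<le> k'"
      then have "offset \<tau> (Suc k') \<le> offset \<tau> k" using off_mono by simp
      then show False using h by simp
    qed
  qed
  then show ?thesis by (simp add: concat_inf_def Let_def)
qed

lemma decomp: "\<exists>k j. j < length (\<tau> k) \<and> i = offset \<tau> k + j"
proof -
  have ex: "\<exists>k. i < offset \<tau> (Suc k)" using off_ge[of "Suc i"] by (intro exI[of _ i]) simp
  define k where "k = (LEAST k. i < offset \<tau> (Suc k))"
  have k1: "i < offset \<tau> (Suc k)" unfolding k_def by (rule LeastI_ex[OF ex])
  have k0: "offset \<tau> k \<le> i"
  proof (cases k)
    case 0 then show ?thesis by (simp add: offset_def)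
  next
    case (Suc m)
    have "\<not> i < offset \<tau> (Suc m)" using Suc k_def not_less_Least by (metis lessI)
    then show ?thesis using Suc by simp
  qed
  show ?thesis using k0 k1 off_Suc[of k] by (intro exI[of _ k] exI[of _ "i - offset \<tau> k"]) auto
qed

lemma pos_mono:
  assumes "j < length (\<tau> k)" "j' < length (\<tau> k')" "offset \<tau> k + j < offset \<tau> k' + j'"
  shows "k \<le> k'"
proof (rule ccontr)
  assume "\<not> k \<le> k'"
  then have "offset \<tau> (Suc k') \<le> offset \<tau> k" using off_mono by simp
  then show False using assms off_Suc[of k'] by simp
qed

lemma val_in: "j < length (\<tau> k) \<Longrightarrow> \<tau> k ! j \<in> Tblock k"
  using setT nth_mem by blast

lemma noAP:
  assumes noap: "\<And>k. \<not> list_has_AP 3 (\<tau> k)"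
  shows "\<not> has_AP 3 (concat_inf \<tau>) UNIV"
proof
  assume "has_AP 3 (concat_inf \<tau>) UNIV"
  then obtain i :: "nat \<Rightarrow> nat" and d :: int where
    d0: "d \<noteq> 0" and inc: "\<forall>m. Suc m < 3 \<longrightarrow> i m < i (Suc m)"
    and df: "\<forall>m. Suc m < 3 \<longrightarrow> int (concat_inf \<tau> (i (Suc m))) - int (concat_inf \<tau> (i m)) = d"
    unfolding has_AP_def by blast
  have i01: "i 0 < i 1" and i12: "i 1 < i 2" using inc by (auto simp: numeral_2_eq_2)
  have d01: "int (concat_inf \<tau> (i 1)) - int (concat_inf \<tau> (i 0)) = d"
    and d12: "int (concat_inf \<tau> (i 2)) - int (concat_inf \<tau> (i 1)) = d"
    using df by (auto simp: numeral_2_eq_2)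
  obtain k0 j0 where a0: "j0 < length (\<tau> k0)" "i 0 = offset \<tau> k0 + j0" using decomp by blast
  obtain k1 j1 where a1: "j1 < length (\<tau> k1)" "i 1 = offset \<tau> k1 + j1" using decomp by blast
  obtain k2 j2 where a2: "j2 < length (\<tau> k2)" "i 2 = offset \<tau> k2 + j2" using decomp by blast
  have c0: "concat_inf \<tau> (i 0) = \<tau> k0 ! j0" using a0 concat_at by simp
  have c1: "concat_inf \<tau> (i 1) = \<tau> k1 ! j1" using a1 concat_at by simp
  have c2: "concat_inf \<tau> (i 2) = \<tau> k2 ! j2" using a2 concat_at by simp
  have v0: "\<tau> k0 ! j0 \<in> Tblock k0" using val_in a0 by simp
  have v1: "\<tau> k1 ! j1 \<in> Tblock k1" using val_in a1 by simp
  have v2: "\<tau> k2 ! j2 \<in> Tblock k2" using val_in a2 by simp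
  have k01: "k0 \<le> k1" using pos_mono[OF a0(1) a1(1)] a0 a1 i01 by simp
  have k12: "k1 \<le> k2" using pos_mono[OF a1(1) a2(1)] a1 a2 i12 by simp
  have D01: "int (\<tau> k1 ! j1) - int (\<tau> k0 ! j0) = d" using d01 c0 c1 by simp
  have D12: "int (\<tau> k2 ! j2) - int (\<tau> k1 ! j1) = d" using d12 c1 c2 by simp
  show False
  proof (cases "k1 < k2")
    case True
    have "2 * (\<tau> k1 ! j1) \<le> \<tau> k2 ! j2" using blocks_far[OF True v1 v2] by simp
    then have "2 * int (\<tau> k1 ! j1) \<le> int (\<tau> k2 ! j2)" by linarith
    moreover have "\<tau> k0 ! j0 \<ge> 1" using T_ge1 v0 by blast
    ultimately show False using D01 D12 by linarith
  next
    case False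
    then have e12: "k2 = k1" using k12 by simp
    show False
    proof (cases "k0 < k1")
      case True
      define x0 where "x0 = \<tau> k0 ! j0"
      define x1 where "x1 = \<tau> k1 ! j1"
      define x2 where "x2 = \<tau> k2 ! j2"
      have v0': "x0 \<in> Tblock k0" and v1': "x1 \<in> Tblock k1" and v2': "x2 \<in> Tblock k1"
        using v0 v1 v2 e12 x0_def x1_def x2_def by simp_all
      have f: "qseq k1 - pseq k1 < x1 - x0" "x0 < x1"
        using blocks_far[OF True v0' v1'] by simp_all
      have g: "x1 \<le> qseq k1" "pseq k1 \<le> x1" "x2 \<le> qseq k1" "pseq k1 \<le> x2"
        using v1' v2' unfolding Tblock_def by simp_all
      have f': "int (qseq k1) - int (pseq k1) < int x1 - int x0"
        using f g p_le_q[of k1] by linarith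
      have D01': "int x1 - int x0 = d" using D01 x0_def x1_def by simp
      have D12': "int x2 - int x1 = d" using D12 x1_def x2_def by simp
      show False using f' g D01' D12' by linarith
    next
      case False
      then have e01: "k0 = k1" using k01 by simp
      let ?k = k1
      have J: "i 0 - offset \<tau> k1 = j0" "i 1 - offset \<tau> k1 = j1" "i 2 - offset \<tau> k1 = j2"
        using a0(2) a1(2) a2(2) e01 e12 by simp_all
      have J': "i (Suc 0) - offset \<tau> k1 = j1" "i (Suc (Suc 0)) - offset \<tau> k1 = j2"
        using J by (simp_all add: numeral_2_eq_2)
      have jj: "j0 < j1" "j1 < j2" using i01 i12 a0(2) a1(2) a2(2) e01 e12 by simp_all
      have L: "j0 < length (\<tau> k1)" "j1 < length (\<tau> k1)" "j2 < length (\<tau> k1)"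
        using a0(1) a1(1) a2(1) e01 e12 by simp_all
      have E: "int (\<tau> k1 ! j1) - int (\<tau> k1 ! j0) = d" "int (\<tau> k1 ! j2) - int (\<tau> k1 ! j1) = d"
        using D01 D12 e01 e12 by simp_all
      have "list_has_AP 3 (\<tau> ?k)"
        unfolding list_has_AP_def has_AP_def
      proof (intro exI[of _ "\<lambda>m. i m - offset \<tau> ?k"] exI[of _ d] conjI allI impI)
        show "d \<noteq> 0" by (rule d0)
      next
        fix m :: nat assume "Suc m < 3"
        then have "m = 0 \<or> m = Suc 0" by linarith
        then show "i m - offset \<tau> ?k < i (Suc m) - offset \<tau> ?k"
          by (elim disjE) (simp_all only: J J' jj)
      next
        fix m :: nat assume "m < 3"
        then have "m = 0 \<or> m = Suc 0 \<or> m = Suc (Suc 0)" by linarith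
        then show "i m - offset \<tau> ?k \<in> {..<length (\<tau> ?k)}"
          by (elim disjE) (simp_all only: J J' L lessThan_iff)
      next
        fix m :: nat assume "Suc m < 3"
        then have "m = 0 \<or> m = Suc 0" by linarith
        then show "int (\<tau> ?k ! (i (Suc m) - offset \<tau> ?k)) - int (\<tau> ?k ! (i m - offset \<tau> ?k)) = d"
          by (elim disjE) (simp_all only: J J' E)
      qed
      then show False using noap by blast
    qed
  qed
qed

lemma bij: "bij_betw (concat_inf \<tau>) UNIV Tset"
  unfolding bij_betw_def
proof
  show "inj (concat_inf \<tau>)"
  proof (rule injI)
    fix x y assume h: "concat_inf \<tau> x = concat_inf \<tau> y"
    obtain k j where a: "j < length (\<tau> k)" "x = offset \<tau> k + j" using decomp by blast
    obtain k' j' where b: "j' < length (\<tau> k')" "y = offset \<tau> k' + j'" using decomp by blast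
    have e: "\<tau> k ! j = \<tau> k' ! j'" using h a b concat_at by simp
    have "k = k'" using blocks_disj val_in[OF a(1)] val_in[OF b(1)] e by metis
    then have "j = j'" using e a(1) b(1) dist nth_eq_iff_index_eq by metis
    then show "x = y" using a b \<open>k = k'\<close> by simp
  qed
next
  show "range (concat_inf \<tau>) = Tset"
  proof (intro equalityI subsetI)
    fix x assume "x \<in> range (concat_inf \<tau>)"
    then obtain i where i: "x = concat_inf \<tau> i" by blast
    obtain k j where a: "j < length (\<tau> k)" "i = offset \<tau> k + j" using decomp by blast
    have "x \<in> Tblock k" using i a concat_at val_in by simp
    then show "x \<in> Tset" unfolding Tset_def by blast
  next
    fix x assume "x \<in> Tset"
    then obtain k where "x \<in> Tblock k" unfolding Tset_def by blast
    then have "x \<in> set (\<tau> k)" using setT by simp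
    then obtain j where "j < length (\<tau> k)" "\<tau> k ! j = x" by (metis in_set_conv_nth)
    then show "x \<in> range (concat_inf \<tau>)" using concat_at by (metis rangeI)
  qed
qed

end

theorem mainTheorem9:
  fixes \<tau> :: "nat \<Rightarrow> nat list"
  assumes "\<And>k. distinct (\<tau> k)"
      and "\<And>k. set (\<tau> k) = Tblock k"
      and "\<And>k. \<not> list_has_AP 3 (\<tau> k)"
  shows "(\<not> has_AP 3 (concat_inf \<tau>) UNIV \<and> n_free 3 Tset) \<and>
         upper_density Tset = ereal (1/2) \<and> lower_density Tset = ereal (1/4)"
proof -
  have n: "\<not> has_AP 3 (concat_inf \<tau>) UNIV" using noAP[OF assms] .
  have "n_free 3 Tset" unfolding n_free_def using n bij[OF assms(1,2)] by blast
  then show ?thesis using n upper lower by simp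
qed

end
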